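(* The group of units $U(\Pi_2)$ of $\Pi_2=\langle a,b,c\mid (ab^ic)^2=1\ (i\geq 1)\rangle$ is isomorphic to the free product of countably infinitely many cyclic groups of order $2$, i.e. to the group $\langle x_i\ (i\geq 1)\mid x_i^2=1\ (i\geq1)\rangle$, via $ab^ic\mapsto x_i$. In particular, $U(\Pi_2)$ is not finitely generated.
   Context: The group of units $U(M)$ of a monoid $M$ is the set of elements having both a left and a right inverse. *)

theory Defs
  imports "HOL-Algebra.Algebra"
begin

inductive_set pres_rel :: "'a set \<Rightarrow> ('a list \<times> 'a list) set \<Rightarrow> ('a list \<times> 'a list) set"
  for S R where
    refl: "w \<in> lists S \<Longrightarrow> (w, w) \<in> pres_rel S R"
  | rel: "(l, r) \<in> R \<Longrightarrow> u \<in> lists S \<Longrightarrow> v \<in> lists S \<Longrightarrow>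
          (u @ l @ v, u @ r @ v) \<in> pres_rel S R"
  | sym: "(w, w') \<in> pres_rel S R \<Longrightarrow> (w', w) \<in> pres_rel S R"
  | trans: "(w, w') \<in> pres_rel S R \<Longrightarrow> (w', w'') \<in> pres_rel S R \<Longrightarrow> (w, w'') \<in> pres_rel S R"

definition pres_class :: "'a set \<Rightarrow> ('a list \<times> 'a list) set \<Rightarrow> 'a list \<Rightarrow> 'a list set" where
  "pres_class S R w = pres_rel S R `` {w}"

definition pres_monoid :: "'a set \<Rightarrow> ('a list \<times> 'a list) set \<Rightarrow> 'a list set monoid" where
  "pres_monoid S R =
     \<lparr> carrier = lists S // pres_rel S R,
       Group.monoid.mult = (\<lambda>U V. pres_rel S R `` {x @ y | x y. x \<in> U \<and> y \<in> V}),
       Group.monoid.one = pres_class S R [] \<rparr>"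

datatype gen = ga | gb | gc

definition word_abic :: "nat \<Rightarrow> gen list" where
  "word_abic i = ga # replicate i gb @ [gc]"

definition Pi2_rels :: "(gen list \<times> gen list) set" where
  "Pi2_rels = {(word_abic i @ word_abic i, []) | i. i \<ge> 1}"

definition Pi2 :: "gen list set monoid" where
  "Pi2 = pres_monoid UNIV Pi2_rels"

text \<open>\<open>\<langle>x\<^sub>i (i \<ge> 1) | x\<^sub>i^2 = 1 (i \<ge> 1)\<rangle>\<close>: generator x_i is the letter i.\<close>
definition Xgens :: "nat set" where "Xgens = {i. i \<ge> 1}"

definition X_rels :: "(nat list \<times> nat list) set" where
  "X_rels = {([i, i], []) | i. i \<ge> 1}"

definition FreeProdZ2 :: "nat list set monoid" where
  "FreeProdZ2 = pres_monoid Xgens X_rels"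

end

theory Submission
  imports Defs
begin



definition rl :: "nat \<Rightarrow> gen list" where "rl i = word_abic i @ word_abic i"
definition irr :: "gen list \<Rightarrow> bool" where
  "irr w \<longleftrightarrow> \<not>(\<exists>x y i. 1 \<le> i \<and> w = x @ rl i @ y)"

lemma rep_b_eq: "replicate i gb @ z # u = replicate j gb @ z' # u' \<Longrightarrow> z \<noteq> gb \<Longrightarrow> z' \<noteq> gb \<Longrightarrow> i = j \<and> z = z' \<and> u = u'"
proof (induction i arbitrary: j)
  case 0 then show ?case by (cases j) auto
next
  case (Suc i) then show ?case by (cases j) auto
qed

lemma word_suffix_eq: assumes "x @ word_abic i = y @ word_abic j" shows "i = j \<and> x = y"
proof -
  from assms have "rev (x @ word_abic i) = rev (y @ word_abic j)" by simp
  then have "gc # replicate i gb @ ga # rev x = gc # replicate j gb @ ga # rev y"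
    by (simp add: word_abic_def)
  then have "replicate i gb @ ga # rev x = replicate j gb @ ga # rev y" by simp
  from rep_b_eq[OF this] show ?thesis by simp
qed

lemma rl_suffix_eq: assumes "x @ rl i = y @ rl j" shows "i = j \<and> x = y"
proof -
  from assms have "(x @ word_abic i) @ word_abic i = (y @ word_abic j) @ word_abic j" by (simp add: rl_def)
  from word_suffix_eq[OF this] have "i = j" "x @ word_abic i = y @ word_abic j" by auto
  with word_suffix_eq[OF this(2)] show ?thesis by simp
qed

lemma rl_last: "last (rl i) = gc" and rl_ne: "rl i \<noteq> []"
  by (auto simp: rl_def word_abic_def)

lemma irr_prefix: "irr (u @ v) \<Longrightarrow> irr u"
  unfolding irr_def by (metis append.assoc)
lemma irr_suffix: "irr (u @ v) \<Longrightarrow> irr v"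
  unfolding irr_def by (metis append.assoc)

lemma irr_snoc_suffix: assumes "irr t" "t @ [y] = x @ rl i @ z" "1 \<le> i" shows "z = []"
proof (rule ccontr)
  assume "z \<noteq> []"
  then obtain z' where "z = z' @ [last z]" by (metis append_butlast_last_id)
  with assms(2) have "t = x @ rl i @ z'" by (metis append.assoc append1_eq_conv)
  with assms show False unfolding irr_def by blast
qed

definition push :: "gen \<Rightarrow> gen list \<Rightarrow> gen list" where
  "push y s = (if \<exists>x i. 1 \<le> i \<and> s @ [y] = x @ rl i
      then (THE x. \<exists>i. 1 \<le> i \<and> s @ [y] = x @ rl i) else s @ [y])"

lemma push_red: assumes "s @ [y] = x @ rl i" "1 \<le> i" shows "push y s = x"
proof -
  have "(THE x. \<exists>i. 1 \<le> i \<and> s @ [y] = x @ rl i) = x"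
    apply (rule the_equality) using assms apply blast
    using assms rl_suffix_eq by metis
  then show ?thesis using assms unfolding push_def by auto
qed

lemma push_irr: assumes "irr (s @ [y])" shows "push y s = s @ [y]"
  using assms unfolding push_def irr_def by (metis append_Nil2)

lemma fold_push_irr: "irr (s @ t) \<Longrightarrow> fold push t s = s @ t"
proof (induction t arbitrary: s)
  case Nil then show ?case by simp
next
  case (Cons y t)
  have "irr (s @ [y])" using Cons.prems irr_prefix[of "s @ [y]" t] by simp
  then have "push y s = s @ [y]" by (rule push_irr)
  then show ?case using Cons by simp
qed

lemma push_irr_pres: assumes "irr s" shows "irr (push y s)"
proof (cases "\<exists>x i. 1 \<le> i \<and> s @ [y] = x @ rl i")
  case True
  then obtain x i where xi: "1 \<le> i" "s @ [y] = x @ rl i" by blast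
  then have "push y s = x" by (simp add: push_red)
  moreover obtain r where "rl i = r @ [y]"
    using xi(2) rl_ne by (metis append_butlast_last_id append_is_Nil_conv last_appendR last_snoc)
  ultimately show ?thesis using xi assms by (metis append.assoc append1_eq_conv irr_prefix)
next
  case False
  have "irr (s @ [y])"
  proof (rule ccontr)
    assume "\<not> irr (s @ [y])"
    then obtain x z i where "1 \<le> i" "s @ [y] = x @ rl i @ z" unfolding irr_def by blast
    with irr_snoc_suffix[OF assms this(2) this(1)] False show False by auto
  qed
  then show ?thesis by (simp add: push_irr)
qed

lemma irr_app_noc: "irr w \<Longrightarrow> gc \<notin> set u \<Longrightarrow> irr (w @ u)"
proof (induction u rule: rev_induct)
  case Nil then show ?case by simp
next
  case (snoc y u)
  show ?case
  proof (rule ccontr)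
    assume "\<not> irr (w @ u @ [y])"
    then obtain x z i where xi: "1 \<le> i" "(w @ u) @ [y] = x @ rl i @ z" unfolding irr_def by auto
    have "irr (w @ u)" using snoc by simp
    from irr_snoc_suffix[OF this xi(2) xi(1)] xi have "(w @ u) @ [y] = x @ rl i" by simp
    then have "y = gc" using rl_last rl_ne by (metis last_appendR last_snoc)
    with snoc show False by simp
  qed
qed

definition nf :: "gen list \<Rightarrow> gen list" where "nf w = fold push w []"

lemma irr_nil: "irr []" unfolding irr_def using rl_ne by auto

lemma fold_push_irr_pres: "irr s \<Longrightarrow> irr (fold push t s)"
  by (induction t arbitrary: s) (auto simp: push_irr_pres)

lemma nf_irr: "irr (nf w)" unfolding nf_def by (simp add: fold_push_irr_pres irr_nil)

lemma nf_id: "irr w \<Longrightarrow> nf w = w" unfolding nf_def using fold_push_irr[of "[]" w] by simp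

lemma nf_append: "nf (u @ v) = fold push v (nf u)" unfolding nf_def by simp

lemma fold_w: "fold push (word_abic i) t = push gc (fold push (ga # replicate i gb) t)"
  by (simp add: word_abic_def)

lemma key: assumes "irr s" "1 \<le> i" shows "fold push (rl i) s = s"
proof -
  let ?p = "ga # replicate i gb"
  have wi: "word_abic i = ?p @ [gc]" by (simp add: word_abic_def)
  have noc: "gc \<notin> set ?p" by auto
  show ?thesis
  proof (cases "\<exists>x. s = x @ word_abic i")
    case True
    then obtain x where x: "s = x @ word_abic i" by blast
    have "fold push ?p s = s @ ?p" by (rule fold_push_irr[OF irr_app_noc[OF assms(1) noc]])
    moreover have "push gc (s @ ?p) = x" by (rule push_red[OF _ assms(2)]) (simp add: x rl_def wi)
    ultimately have "fold push (word_abic i) s = x" by (simp only: fold_w)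
    moreover have "fold push (word_abic i) x = s" using assms(1) x by (simp add: fold_push_irr)
    ultimately show ?thesis by (simp add: rl_def)
  next
    case False
    have i1: "fold push ?p s = s @ ?p" by (rule fold_push_irr[OF irr_app_noc[OF assms(1) noc]])
    have "irr (s @ word_abic i)"
    proof (rule ccontr)
      assume "\<not> irr (s @ word_abic i)"
      then obtain x z j where xj: "1 \<le> j" "(s @ ?p) @ [gc] = x @ rl j @ z" unfolding irr_def wi by auto
      from irr_snoc_suffix[OF irr_app_noc[OF assms(1) noc] xj(2) xj(1)] xj
      have "s @ word_abic i = (x @ word_abic j) @ word_abic j" by (simp add: wi rl_def)
      from word_suffix_eq[OF this] False show False by auto
    qed
    then have s1: "push gc (s @ ?p) = s @ word_abic i"
      by (simp add: push_irr wi)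
    have i2: "fold push ?p (s @ word_abic i) = s @ word_abic i @ ?p"
      using fold_push_irr[OF irr_app_noc[OF \<open>irr (s @ word_abic i)\<close> noc]] by simp
    have s2: "push gc (s @ word_abic i @ ?p) = s"
      by (rule push_red[OF _ assms(2), of _ _ s]) (simp add: rl_def wi)
    show ?thesis unfolding rl_def fold_append comp_def fold_w i1 s1 i2 s2 ..
  qed
qed




locale pres = fixes S :: "'a set" and R assumes Rsub: "R \<subseteq> lists S \<times> lists S"
begin

lemma in_lists: "(w, w') \<in> pres_rel S R \<Longrightarrow> w \<in> lists S \<and> w' \<in> lists S"
  by (induction rule: pres_rel.induct) (use Rsub in auto)

lemma cong: "(w, w') \<in> pres_rel S R \<Longrightarrow> u \<in> lists S \<Longrightarrow> v \<in> lists S \<Longrightarrow> (u @ w @ v, u @ w' @ v) \<in> pres_rel S R"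
proof (induction rule: pres_rel.induct)
  case (refl w) then show ?case by (auto intro!: pres_rel.refl)
next
  case (rel l r u' v')
  then show ?case using pres_rel.rel[where l=l and r=r and u="u @ u'" and v="v' @ v" and S=S and R=R] by simp
next
  case (sym w w') then show ?case by (auto intro: pres_rel.sym)
next
  case (trans w w' w'') then show ?case by (meson pres_rel.trans)
qed

lemma equiv: "equiv (lists S) (pres_rel S R)"
  unfolding equiv_def refl_on_def sym_def trans_def
  using in_lists by (auto intro: pres_rel.refl pres_rel.sym pres_rel.trans)

lemma class_eq_iff: "u \<in> lists S \<Longrightarrow> v \<in> lists S \<Longrightarrow> pres_class S R u = pres_class S R v \<longleftrightarrow> (u, v) \<in> pres_rel S R"
  unfolding pres_class_def using equiv by (simp add: equiv_class_eq_iff)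

lemma carrier_eq: "carrier (pres_monoid S R) = {pres_class S R w | w. w \<in> lists S}"
  unfolding pres_monoid_def pres_class_def quotient_def by auto

lemma one_eq: "Group.monoid.one (pres_monoid S R) = pres_class S R []"
  unfolding pres_monoid_def by simp

lemma mult_eq: assumes "u \<in> lists S" "v \<in> lists S"
  shows "Group.monoid.mult (pres_monoid S R) (pres_class S R u) (pres_class S R v) = pres_class S R (u @ v)"
proof -
  have A: "{x @ y | x y. x \<in> pres_class S R u \<and> y \<in> pres_class S R v} \<subseteq> pres_rel S R `` {u @ v}"
  proof
    fix z assume "z \<in> {x @ y | x y. x \<in> pres_class S R u \<and> y \<in> pres_class S R v}"
    then obtain x y where z: "z = x @ y" "(u, x) \<in> pres_rel S R" "(v, y) \<in> pres_rel S R"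
      unfolding pres_class_def by auto
    have "(u @ v, x @ v) \<in> pres_rel S R" using cong[OF z(2), of "[]" v] assms by simp
    moreover have "(x @ v, x @ y) \<in> pres_rel S R" using cong[OF z(3), of x "[]"] in_lists z(2) by simp
    ultimately show "z \<in> pres_rel S R `` {u @ v}" using z(1) by (auto intro: pres_rel.trans)
  qed
  have B: "u @ v \<in> {x @ y | x y. x \<in> pres_class S R u \<and> y \<in> pres_class S R v}"
    unfolding pres_class_def using assms by (auto intro: pres_rel.refl)
  have "pres_rel S R `` {x @ y | x y. x \<in> pres_class S R u \<and> y \<in> pres_class S R v} = pres_rel S R `` {u @ v}"
  proof
    show "pres_rel S R `` {x @ y | x y. x \<in> pres_class S R u \<and> y \<in> pres_class S R v} \<subseteq> pres_rel S R `` {u @ v}"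
      using A equiv by (auto dest: equivE intro: pres_rel.trans pres_rel.sym)
    show "pres_rel S R `` {u @ v} \<subseteq> pres_rel S R `` {x @ y | x y. x \<in> pres_class S R u \<and> y \<in> pres_class S R v}"
      using B by auto
  qed
  then show ?thesis unfolding pres_monoid_def pres_class_def by simp
qed

end

interpretation G: pres UNIV Pi2_rels by unfold_locales auto
interpretation X: pres Xgens X_rels by unfold_locales (auto simp: X_rels_def Xgens_def)

abbreviation "GR \<equiv> pres_rel UNIV Pi2_rels"
abbreviation "CG \<equiv> pres_class UNIV Pi2_rels"
abbreviation "XR \<equiv> pres_rel Xgens X_rels"
abbreviation "CX \<equiv> pres_class Xgens X_rels"

lemma GR_cong: "(w, w') \<in> GR \<Longrightarrow> (u @ w @ v, u @ w' @ v) \<in> GR"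
  using G.cong by simp

lemma rl_GR: "1 \<le> i \<Longrightarrow> (u @ rl i @ v, u @ v) \<in> GR"
  using pres_rel.rel[where l="rl i" and r="[]" and R=Pi2_rels and S=UNIV and u=u and v=v] by (auto simp: Pi2_rels_def rl_def)

lemma push_GR: "(s @ [y], push y s) \<in> GR"
proof (cases "\<exists>x i. 1 \<le> i \<and> s @ [y] = x @ rl i")
  case True
  then obtain x i where "1 \<le> i" "s @ [y] = x @ rl i" by blast
  then show ?thesis using rl_GR[of i x "[]"] push_red by simp
next
  case False then show ?thesis unfolding push_def by (auto intro: pres_rel.refl)
qed

lemma nf_GR: "(w, nf w) \<in> GR"
proof (induction w rule: rev_induct)
  case Nil then show ?case by (simp add: nf_def pres_rel.refl)
next
  case (snoc y w)
  have "(w @ [y], nf w @ [y]) \<in> GR" using GR_cong[OF snoc, of "[]" "[y]"] by simp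
  moreover have "nf (w @ [y]) = push y (nf w)" by (simp add: nf_def)
  ultimately show ?case using push_GR by (metis pres_rel.trans)
qed

lemma GR_nf: "(w, w') \<in> GR \<Longrightarrow> nf w = nf w'"
proof (induction rule: pres_rel.induct)
  case (rel l r u v)
  then obtain i where "1 \<le> i" "l = rl i" "r = []" by (auto simp: Pi2_rels_def rl_def)
  then show ?case using key[OF nf_irr] by (simp add: nf_append)
qed auto

lemma GR_iff: "(w, w') \<in> GR \<longleftrightarrow> nf w = nf w'"
  using GR_nf nf_GR by (metis pres_rel.sym pres_rel.trans)

lemma CG_eq_iff: "CG u = CG v \<longleftrightarrow> nf u = nf v"
  using G.class_eq_iff GR_iff by simp

lemma Pi2_mult: "Group.monoid.mult Pi2 (CG u) (CG v) = CG (u @ v)"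
  unfolding Pi2_def using G.mult_eq by simp
lemma Pi2_one: "Group.monoid.one Pi2 = CG []" unfolding Pi2_def using G.one_eq by simp
lemma Pi2_carrier: "carrier Pi2 = range CG" unfolding Pi2_def using G.carrier_eq by auto

lemma FP_mult: "u \<in> lists Xgens \<Longrightarrow> v \<in> lists Xgens \<Longrightarrow> Group.monoid.mult FreeProdZ2 (CX u) (CX v) = CX (u @ v)"
  unfolding FreeProdZ2_def using X.mult_eq by simp
lemma FP_carrier: "carrier FreeProdZ2 = CX ` lists Xgens" unfolding FreeProdZ2_def using X.carrier_eq by auto




definition E :: "nat list \<Rightarrow> gen list" where "E ks = concat (map word_abic ks)"
definition xred :: "nat list \<Rightarrow> bool" where "xred ks \<longleftrightarrow> \<not>(\<exists>p q k. ks = p @ k # k # q)"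

lemma E_simps[simp]: "E [] = []" "E (k # ks) = word_abic k @ E ks" "E (ks @ js) = E ks @ E js"
  by (auto simp: E_def)

lemma rep_c_split: "replicate k gb @ gc # u = x' @ ga # v \<Longrightarrow> \<exists>x''. x' = replicate k gb @ gc # x'' \<and> u = x'' @ ga # v"
proof (induction k arbitrary: x')
  case 0 then show ?case by (cases x') auto
next
  case (Suc k) then show ?case by (cases x') auto
qed

lemma E_inj: "E xs = E js \<Longrightarrow> xs = js"
proof (induction xs arbitrary: js)
  case Nil then show ?case by (cases js) (auto simp: word_abic_def)
next
  case (Cons i xs)
  then show ?case
  proof (cases js)
    case Nil then show ?thesis using Cons by (auto simp: word_abic_def)
  next
    case (Cons j js')
    with Cons.prems have "replicate i gb @ gc # E xs = replicate j gb @ gc # E js'"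
      by (simp add: word_abic_def)
    from rep_b_eq[OF this] Cons Cons.IH show ?thesis by auto
  qed
qed

lemma E_XR: "(xs, js) \<in> XR \<Longrightarrow> (E xs, E js) \<in> GR"
proof (induction rule: pres_rel.induct)
  case (refl w) then show ?case by (simp add: pres_rel.refl)
next
  case (rel l r u v)
  then obtain k where "1 \<le> k" "l = [k, k]" "r = []" by (auto simp: X_rels_def)
  then show ?case using rl_GR[of k "E u" "E v"] by (simp add: rl_def)
next
  case (sym w w') then show ?case by (blast intro: pres_rel.sym)
next
  case (trans w w' w'') then show ?case by (meson pres_rel.trans)
qed

lemma E_inv: "ks \<in> lists Xgens \<Longrightarrow> (E ks @ E (rev ks), []) \<in> GR"
proof (induction ks)
  case Nil then show ?case by (simp add: pres_rel.refl)
next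
  case (Cons k ks)
  then have k: "1 \<le> k" by (simp add: Xgens_def)
  have "(word_abic k @ (E ks @ E (rev ks)) @ word_abic k, word_abic k @ [] @ word_abic k) \<in> GR"
    using GR_cong[OF Cons.IH] Cons.prems by auto
  moreover have "(word_abic k @ word_abic k, []) \<in> GR" using rl_GR[OF k, of "[]" "[]"] by (simp add: rl_def)
  ultimately show ?case by (auto intro: pres_rel.trans)
qed

lemma red_ex: "ks \<in> lists Xgens \<Longrightarrow> \<exists>ks'. xred ks' \<and> set ks' \<subseteq> set ks \<and> (ks, ks') \<in> XR"
proof (induction "length ks" arbitrary: ks rule: less_induct)
  case less
  show ?case
  proof (cases "xred ks")
    case True then show ?thesis using less.prems by (auto intro: pres_rel.refl)
  next
    case False
    then obtain p q k where ks: "ks = p @ k # k # q" unfolding xred_def by blast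
    with less.prems have k: "k \<in> Xgens" "p \<in> lists Xgens" "q \<in> lists Xgens" by auto
    have r: "(ks, p @ q) \<in> XR" using pres_rel.rel[where l="[k,k]" and r="[]" and R=X_rels and S=Xgens and u=p and v=q] k ks
      by (auto simp: X_rels_def Xgens_def)
    from less.hyps[of "p @ q"] ks k obtain ks' where "xred ks'" "set ks' \<subseteq> set (p @ q)" "(p @ q, ks') \<in> XR" by auto
    then show ?thesis using r ks by (auto intro: pres_rel.trans)
  qed
qed

lemma E_token: "E ks = x @ ga # rest \<Longrightarrow> \<exists>ks1 ks2. ks = ks1 @ ks2 \<and> x = E ks1 \<and> ga # rest = E ks2"
proof (induction ks arbitrary: x)
  case Nil then show ?case by simp
next
  case (Cons k ks)
  show ?case
  proof (cases x)
    case Nil then show ?thesis using Cons.prems by (intro exI[of _ "[]"] exI[of _ "k # ks"]) auto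
  next
    case (Cons z x')
    with Cons.prems have "replicate k gb @ gc # E ks = x' @ ga # rest" and z: "z = ga" by (auto simp: word_abic_def)
    from rep_c_split[OF this(1)] obtain x'' where x'': "x' = replicate k gb @ gc # x''" "E ks = x'' @ ga # rest" by blast
    from Cons.IH[OF x''(2)] obtain ks1 ks2 where "ks = ks1 @ ks2" "x'' = E ks1" "ga # rest = E ks2" by blast
    then show ?thesis using Cons x'' z by (intro exI[of _ "k # ks1"] exI[of _ ks2]) (auto simp: word_abic_def)
  qed
qed

lemma E_decomp: "E ks = word_abic j @ y \<Longrightarrow> \<exists>ks'. ks = j # ks' \<and> y = E ks'"
proof (cases ks)
  case Nil then show "E ks = word_abic j @ y \<Longrightarrow> ?thesis" by (simp add: word_abic_def)
next
  case (Cons k ks')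
  assume "E ks = word_abic j @ y"
  with Cons have "replicate k gb @ gc # E ks' = replicate j gb @ gc # y" by (simp add: word_abic_def)
  from rep_b_eq[OF this] Cons show ?thesis by auto
qed

lemma E_irr: "xred ks \<Longrightarrow> irr (E ks)"
proof (rule ccontr)
  assume xr: "xred ks" and "\<not> irr (E ks)"
  then obtain x y j where j: "E ks = x @ rl j @ y" unfolding irr_def by blast
  then have "E ks = x @ ga # (tl (rl j) @ y)" by (simp add: rl_def word_abic_def)
  from E_token[OF this] obtain ks1 ks2 where k: "ks = ks1 @ ks2" "x = E ks1" "ga # (tl (rl j) @ y) = E ks2" by blast
  then have "E ks2 = word_abic j @ (word_abic j @ y)" by (simp add: rl_def word_abic_def)
  from E_decomp[OF this] obtain ks3 where k3: "ks2 = j # ks3" "E ks3 = word_abic j @ y" by auto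
  from E_decomp[OF k3(2)] obtain ks4 where "ks3 = j # ks4" by auto
  with k k3 xr show False unfolding xred_def by auto
qed

lemma UX: assumes "xs \<in> lists Xgens" "js \<in> lists Xgens" "(E xs, E js) \<in> GR" shows "(xs, js) \<in> XR"
proof -
  obtain xs' where a: "xred xs'" "(xs, xs') \<in> XR" using red_ex[OF assms(1)] by blast
  obtain js' where b: "xred js'" "(js, js') \<in> XR" using red_ex[OF assms(2)] by blast
  have "(E xs', E js') \<in> GR" using E_XR[OF a(2)] E_XR[OF b(2)] assms(3) by (meson pres_rel.sym pres_rel.trans)
  then have "nf (E xs') = nf (E js')" by (simp add: GR_iff)
  then have "xs' = js'" using nf_id E_irr a b E_inj by metis
  then show ?thesis using a b by (meson pres_rel.sym pres_rel.trans)
qed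




lemma irr_single: "irr [y]"
proof -
  { fix x z i assume h: "[y] = x @ rl i @ z"
    then have "length [y] = length x + length (rl i) + length z" by simp
    moreover have "length (rl i) \<ge> 2" by (simp add: rl_def word_abic_def)
    ultimately have False by simp }
  then show ?thesis unfolding irr_def by blast
qed

lemma push_nil: "push y [] = [y]" using push_irr[of "[]" y] irr_single by simp

lemma fold_push_hd: "s \<noteq> [] \<Longrightarrow> fold push ys s = [] \<Longrightarrow> hd s = ga"
proof (induction ys arbitrary: s)
  case Nil then show ?case by simp
next
  case (Cons y ys)
  show ?case
  proof (cases "\<exists>x i. 1 \<le> i \<and> s @ [y] = x @ rl i")
    case True
    then obtain x i where xi: "1 \<le> i" "s @ [y] = x @ rl i" by blast
    then have p: "push y s = x" by (simp add: push_red)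
    show ?thesis
    proof (cases "x = []")
      case True
      with xi Cons.prems have "hd (s @ [y]) = ga" by (simp add: rl_def word_abic_def)
      with Cons.prems show ?thesis by simp
    next
      case False
      with Cons.IH[of x] Cons.prems p have "hd x = ga" by simp
      moreover have "hd (s @ [y]) = hd x" using xi(2) False by simp
      ultimately show ?thesis using Cons.prems by simp
    qed
  next
    case False
    then have "push y s = s @ [y]" unfolding push_def by (rule if_not_P)
    with Cons.IH[of "s @ [y]"] Cons.prems show ?thesis by simp
  qed
qed

lemma nf_nil_hd: assumes "w \<noteq> []" "nf w = []" shows "hd w = ga"
proof -
  obtain y w' where w: "w = y # w'" using assms(1) by (cases w) auto
  have "fold push w' [y] = []" using assms(2) by (simp add: nf_def w push_nil)
  from fold_push_hd[OF _ this] w show ?thesis by simp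
qed

lemma suffix_a: assumes "p @ q = rl i" "p \<noteq> []" "q \<noteq> []" "hd q = ga" shows "q = word_abic i"
proof -
  obtain v where q: "q = ga # v" using assms(3,4) by (cases q) auto
  obtain p' where p: "p = ga # p'" using assms(1,2) by (cases p) (auto simp: rl_def word_abic_def)
  have "replicate i gb @ gc # (ga # replicate i gb @ [gc]) = p' @ ga # v"
    using assms(1) p q by (simp add: rl_def word_abic_def)
  from rep_c_split[OF this] obtain x'' where x: "ga # replicate i gb @ [gc] = x'' @ ga # v" by blast
  have "x'' = []"
  proof (rule ccontr)
    assume "x'' \<noteq> []"
    then obtain x3 where "x'' = ga # x3" using x by (cases x'') auto
    with x have "replicate i gb @ [gc] = x3 @ ga # v" by simp
    then have "ga \<in> set (replicate i gb @ [gc])" by simp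
    then show False by auto
  qed
  with x q show ?thesis by (simp add: word_abic_def)
qed

lemma straddle: assumes "irr v" "irr z" "v @ z = x @ rl i @ y" "1 \<le> i"
  shows "\<exists>p q. p \<noteq> [] \<and> q \<noteq> [] \<and> rl i = p @ q \<and> v = x @ p \<and> z = q @ y"
proof -
  from assms(3) obtain us where
    "(v = x @ us \<and> us @ z = rl i @ y) \<or> (v @ us = x \<and> z = us @ rl i @ y)"
    using append_eq_append_conv2[of v z x "rl i @ y"] by blast
  then show ?thesis
  proof
    assume "v @ us = x \<and> z = us @ rl i @ y"
    then have False using assms(2,4) unfolding irr_def by blast
    then show ?thesis ..
  next
    assume h: "v = x @ us \<and> us @ z = rl i @ y"
    then obtain us' where
      "(us = rl i @ us' \<and> us' @ z = y) \<or> (us @ us' = rl i \<and> z = us' @ y)"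
      using append_eq_append_conv2[of us z "rl i" y] by blast
    then show ?thesis
    proof
      assume "us = rl i @ us' \<and> us' @ z = y"
      with h have "v = x @ rl i @ us'" by simp
      then have False using assms(1,4) unfolding irr_def by blast
      then show ?thesis ..
    next
      assume h2: "us @ us' = rl i \<and> z = us' @ y"
      have "us \<noteq> []"
      proof
        assume "us = []" with h2 have "z = [] @ rl i @ y" by simp
        with assms(2,4) show False unfolding irr_def by blast
      qed
      moreover have "us' \<noteq> []"
      proof
        assume "us' = []" with h2 h have "v = x @ rl i @ []" by simp
        with assms(1,4) show False unfolding irr_def by blast
      qed
      ultimately show ?thesis using h h2 by (intro exI[of _ us] exI[of _ us']) simp
    qed
  qed
qed

lemma nf_nf: "nf (nf w) = nf w" by (simp add: nf_id nf_irr)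

lemma CG_nf: "CG (nf w) = CG w" by (simp add: CG_eq_iff nf_nf)

lemma Units_E: "irr z \<Longrightarrow> CG z \<in> Units Pi2 \<Longrightarrow> \<exists>ks\<in>lists Xgens. z = E ks"
proof (induction "length z" arbitrary: z rule: less_induct)
  case less
  show ?case
  proof (cases "z = []")
    case True then show ?thesis by (intro bexI[of _ "[]"]) auto
  next
    case False
    from less.prems(2) obtain V where V: "V \<in> carrier Pi2" "Group.monoid.mult Pi2 V (CG z) = Group.monoid.one Pi2"
      "Group.monoid.mult Pi2 (CG z) V = Group.monoid.one Pi2" unfolding Units_def by blast
    from V(1) obtain v0 where "V = CG v0" by (auto simp: Pi2_carrier)
    then have Vv: "V = CG (nf v0)" by (simp add: CG_nf)
    define v where "v = nf v0"
    have iv: "irr v" by (simp add: v_def nf_irr)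
    have e1: "nf (v @ z) = []" using V(2) Vv by (simp add: Pi2_mult Pi2_one CG_eq_iff v_def nf_def)
    have e2: "nf (z @ v) = []" using V(3) Vv by (simp add: Pi2_mult Pi2_one CG_eq_iff v_def nf_def)
    have e2': "(z @ v, []) \<in> GR" using e2 by (simp add: GR_iff nf_def)
    have hz: "hd z = ga" using nf_nil_hd[OF _ e2] False by simp
    have "\<not> irr (v @ z)" using e1 nf_id False by (metis Nil_is_append_conv)
    then obtain x y i where xi: "1 \<le> i" "v @ z = x @ rl i @ y" unfolding irr_def by blast
    from straddle[OF iv less.prems(1) xi(2) xi(1)] obtain p q where
      pq: "p \<noteq> []" "q \<noteq> []" "rl i = p @ q" "v = x @ p" "z = q @ y" by blast
    have "q = word_abic i" using suffix_a[OF pq(3)[symmetric] pq(1,2)] hz pq(5) pq(2) by simp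
    with pq have z: "z = word_abic i @ y" by simp
    have iy: "irr y" using less.prems(1) z irr_suffix by blast
    have "CG y \<in> Units Pi2"
    proof -
      have a1: "(word_abic i @ z, y) \<in> GR" using rl_GR[OF xi(1), of "[]" y] z by (simp add: rl_def)
      have c1: "(y @ v @ word_abic i, word_abic i @ z @ v @ word_abic i) \<in> GR"
        using pres_rel.sym[OF GR_cong[OF a1, of "[]" "v @ word_abic i"]] by simp
      have c2: "(word_abic i @ z @ v @ word_abic i, word_abic i @ word_abic i) \<in> GR"
        using GR_cong[OF e2', of "word_abic i" "word_abic i"] by simp
      have c3: "(word_abic i @ word_abic i, []) \<in> GR" using rl_GR[OF xi(1), of "[]" "[]"] by (simp add: rl_def)
      have "(y @ v @ word_abic i, []) \<in> GR" using pres_rel.trans[OF c1 pres_rel.trans[OF c2 c3]] .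
      then have m1: "Group.monoid.mult Pi2 (CG y) (CG (v @ word_abic i)) = Group.monoid.one Pi2"
        by (simp add: Pi2_mult Pi2_one G.class_eq_iff)
      have "(v @ word_abic i @ y, []) \<in> GR" using e1 z by (simp add: GR_iff nf_def)
      then have m2: "Group.monoid.mult Pi2 (CG (v @ word_abic i)) (CG y) = Group.monoid.one Pi2"
        by (simp add: Pi2_mult Pi2_one G.class_eq_iff)
      show ?thesis unfolding Units_def using m1 m2 by (auto simp: Pi2_carrier)
    qed
    have "length y < length z" using z by (simp add: word_abic_def)
    from less.hyps[OF this iy \<open>CG y \<in> Units Pi2\<close>] obtain ks where "ks \<in> lists Xgens" "y = E ks" by auto
    then show ?thesis using z xi(1) by (intro bexI[of _ "i # ks"]) (auto simp: Xgens_def)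
  qed
qed

lemma E_Units: assumes "ks \<in> lists Xgens" shows "CG (E ks) \<in> Units Pi2"
proof -
  have "rev ks \<in> lists Xgens" using assms by auto
  from E_inv[OF assms] E_inv[OF this] have "(E ks @ E (rev ks), []) \<in> GR" "(E (rev ks) @ E ks, []) \<in> GR" by auto
  then show ?thesis unfolding Units_def
    by (auto simp: Pi2_carrier Pi2_mult Pi2_one G.class_eq_iff)
qed

lemma Units_char: "U \<in> Units Pi2 \<longleftrightarrow> (\<exists>ks\<in>lists Xgens. U = CG (E ks))"
proof
  assume U: "U \<in> Units Pi2"
  then obtain w where "U = CG w" unfolding Units_def by (auto simp: Pi2_carrier)
  then have "U = CG (nf w)" by (simp add: CG_nf)
  with Units_E[OF nf_irr] U show "\<exists>ks\<in>lists Xgens. U = CG (E ks)" by metis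
qed (auto intro: E_Units)




definition hmap :: "gen list set \<Rightarrow> nat list set" where
  "hmap U = CX (SOME ks. ks \<in> lists Xgens \<and> U = CG (E ks))"

lemma CG_E_eq: "ks \<in> lists Xgens \<Longrightarrow> js \<in> lists Xgens \<Longrightarrow> CG (E ks) = CG (E js) \<Longrightarrow> CX ks = CX js"
  using G.class_eq_iff[of "E ks" "E js"] UX X.class_eq_iff by simp

lemma h_E: assumes "ks \<in> lists Xgens" shows "hmap (CG (E ks)) = CX ks"
proof -
  let ?P = "\<lambda>js. js \<in> lists Xgens \<and> CG (E ks) = CG (E js)"
  have "?P (SOME js. ?P js)" by (rule someI[of ?P ks]) (use assms in simp)
  then show ?thesis unfolding hmap_def using CG_E_eq[OF assms] by metis
qed

lemma xred_single: "xred [k]" unfolding xred_def by (auto simp: Cons_eq_append_conv)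

lemma XR_red_eq: assumes "xred a" "xred b" "(a, b) \<in> XR" shows "a = b"
proof -
  have "nf (E a) = nf (E b)" using E_XR[OF assms(3)] by (simp add: GR_iff)
  then show ?thesis using nf_id E_irr assms(1,2) E_inj by metis
qed

lemma inv_units: assumes "ks \<in> lists Xgens"
  shows "m_inv (units_of Pi2) (CG (E ks)) = CG (E (rev ks))"
  unfolding m_inv_def
proof (rule the_equality)
  have r: "rev ks \<in> lists Xgens" using assms by auto
  from E_inv[OF assms] E_inv[OF r] have "(E ks @ E (rev ks), []) \<in> GR" "(E (rev ks) @ E ks, []) \<in> GR" by auto
  then show "CG (E (rev ks)) \<in> carrier (units_of Pi2) \<and>
    Group.monoid.mult (units_of Pi2) (CG (E ks)) (CG (E (rev ks))) = Group.monoid.one (units_of Pi2) \<and>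
    Group.monoid.mult (units_of Pi2) (CG (E (rev ks))) (CG (E ks)) = Group.monoid.one (units_of Pi2)"
    using E_Units[OF r] by (simp add: units_of_def Pi2_mult Pi2_one G.class_eq_iff)
next
  fix y assume y: "y \<in> carrier (units_of Pi2) \<and>
    Group.monoid.mult (units_of Pi2) (CG (E ks)) y = Group.monoid.one (units_of Pi2) \<and>
    Group.monoid.mult (units_of Pi2) y (CG (E ks)) = Group.monoid.one (units_of Pi2)"
  then obtain yw where yw: "y = CG yw" by (auto simp: units_of_def Units_def Pi2_carrier)
  with y have "(yw @ E ks, []) \<in> GR" by (simp add: units_of_def Pi2_mult Pi2_one G.class_eq_iff)
  then have "nf (yw @ E ks) = nf []" by (simp add: GR_iff)
  moreover have "nf (yw @ E ks @ E (rev ks)) = nf yw"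
    using E_inv[OF assms] GR_cong[of "E ks @ E (rev ks)" "[]" yw "[]"] by (simp add: GR_iff)
  ultimately have "nf yw = nf (E (rev ks))"
    by (metis GR_cong GR_iff append.assoc append_Nil append_Nil2)
  then show "y = CG (E (rev ks))" using yw by (simp add: CG_eq_iff)
qed

lemma gen_bound:
  assumes "\<forall>U\<in>F. \<exists>ks\<in>lists Xgens. set ks \<subseteq> {..N} \<and> U = CG (E ks)"
  shows "U \<in> generate (units_of Pi2) F \<Longrightarrow> \<exists>ks\<in>lists Xgens. set ks \<subseteq> {..N} \<and> U = CG (E ks)"
proof (induction rule: generate.induct)
  case one then show ?case by (intro bexI[of _ "[]"]) (auto simp: units_of_def Pi2_one)
next
  case (incl h) then show ?case using assms by blast
next
  case (inv h)
  then obtain ks where "ks \<in> lists Xgens" "set ks \<subseteq> {..N}" "h = CG (E ks)" using assms by blast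
  then show ?case using inv_units by (intro bexI[of _ "rev ks"]) auto
next
  case (eng h1 h2)
  then obtain ks js where "ks \<in> lists Xgens" "set ks \<subseteq> {..N}" "h1 = CG (E ks)"
    "js \<in> lists Xgens" "set js \<subseteq> {..N}" "h2 = CG (E js)" by blast
  then show ?case by (intro bexI[of _ "ks @ js"]) (auto simp: units_of_def Pi2_mult)
qed

lemma finite_bound: "finite F \<Longrightarrow> F \<subseteq> Units Pi2 \<Longrightarrow> \<exists>N. \<forall>U\<in>F. \<exists>ks\<in>lists Xgens. set ks \<subseteq> {..N} \<and> U = CG (E ks)"
proof (induction rule: finite_induct)
  case empty then show ?case by simp
next
  case (insert U F)
  then obtain N where N: "\<forall>U\<in>F. \<exists>ks\<in>lists Xgens. set ks \<subseteq> {..N} \<and> U = CG (E ks)" by auto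
  from insert.prems obtain ks where ks: "ks \<in> lists Xgens" "U = CG (E ks)" using Units_char by auto
  have "set ks \<subseteq> {..N + sum_list ks}" using member_le_sum_list by fastforce
  moreover have "\<forall>U\<in>F. \<exists>ks\<in>lists Xgens. set ks \<subseteq> {..N + sum_list ks'} \<and> U = CG (E ks)" for ks'
    using N by fastforce
  ultimately show ?case using ks by (intro exI[of _ "N + sum_list ks"]) auto
qed

theorem mainTheorem9:
  shows "(\<exists>h. h \<in> iso (units_of Pi2) FreeProdZ2 \<and>
            (\<forall>i\<ge>1. pres_class UNIV Pi2_rels (word_abic i) \<in> Units Pi2 \<and>
                    h (pres_class UNIV Pi2_rels (word_abic i)) = pres_class Xgens X_rels [i]))
       \<and> \<not> (\<exists>F. finite F \<and> F \<subseteq> carrier (units_of Pi2) \<and>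
               generate (units_of Pi2) F = carrier (units_of Pi2))"
proof
  have hom: "hmap \<in> hom (units_of Pi2) FreeProdZ2"
  proof (rule homI)
    fix U assume "U \<in> carrier (units_of Pi2)"
    then obtain ks where "ks \<in> lists Xgens" "U = CG (E ks)" by (auto simp: units_of_def Units_char)
    then show "hmap U \<in> carrier FreeProdZ2" by (simp add: h_E FP_carrier)
  next
    fix U V assume "U \<in> carrier (units_of Pi2)" "V \<in> carrier (units_of Pi2)"
    then obtain ks js where "ks \<in> lists Xgens" "U = CG (E ks)" "js \<in> lists Xgens" "V = CG (E js)"
      by (auto simp: units_of_def Units_char)
    then show "hmap (Group.monoid.mult (units_of Pi2) U V) = Group.monoid.mult FreeProdZ2 (hmap U) (hmap V)"
      by (simp add: units_of_def Pi2_mult h_E FP_mult flip: E_simps(3))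
  qed
  have bij: "bij_betw hmap (carrier (units_of Pi2)) (carrier FreeProdZ2)"
    unfolding bij_betw_def
  proof
    show "inj_on hmap (carrier (units_of Pi2))"
    proof (rule inj_onI)
      fix U V assume "U \<in> carrier (units_of Pi2)" "V \<in> carrier (units_of Pi2)" "hmap U = hmap V"
      then obtain ks js where k: "ks \<in> lists Xgens" "U = CG (E ks)" "js \<in> lists Xgens" "V = CG (E js)"
        "hmap U = hmap V" by (auto simp: units_of_def Units_char)
      then have "CX ks = CX js" by (simp add: h_E)
      then have "(ks, js) \<in> XR" using X.class_eq_iff k by simp
      from E_XR[OF this] k show "U = V" using G.class_eq_iff by simp
    qed
    show "hmap ` carrier (units_of Pi2) = carrier FreeProdZ2"
    proof
      show "hmap ` carrier (units_of Pi2) \<subseteq> carrier FreeProdZ2"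
        using hom unfolding hom_def by auto
      show "carrier FreeProdZ2 \<subseteq> hmap ` carrier (units_of Pi2)"
      proof
        fix W assume "W \<in> carrier FreeProdZ2"
        then obtain ks where "ks \<in> lists Xgens" "W = CX ks" by (auto simp: FP_carrier)
        then show "W \<in> hmap ` carrier (units_of Pi2)"
          using E_Units h_E by (auto simp: units_of_def intro!: image_eqI[of _ _ "CG (E ks)"])
      qed
    qed
  qed
  have wi: "\<forall>i\<ge>1. CG (word_abic i) \<in> Units Pi2 \<and> hmap (CG (word_abic i)) = CX [i]"
  proof (intro allI impI)
    fix i :: nat assume "1 \<le> i"
    then have "[i] \<in> lists Xgens" by (simp add: Xgens_def)
    with E_Units[OF this] h_E[OF this] show "CG (word_abic i) \<in> Units Pi2 \<and> hmap (CG (word_abic i)) = CX [i]"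
      by simp
  qed
  show "\<exists>h. h \<in> iso (units_of Pi2) FreeProdZ2 \<and>
            (\<forall>i\<ge>1. CG (word_abic i) \<in> Units Pi2 \<and> h (CG (word_abic i)) = CX [i])"
    using hom bij wi unfolding iso_def by blast
next
  show "\<not> (\<exists>F. finite F \<and> F \<subseteq> carrier (units_of Pi2) \<and>
               generate (units_of Pi2) F = carrier (units_of Pi2))"
  proof
    assume "\<exists>F. finite F \<and> F \<subseteq> carrier (units_of Pi2) \<and> generate (units_of Pi2) F = carrier (units_of Pi2)"
    then obtain F where F: "finite F" "F \<subseteq> Units Pi2" "generate (units_of Pi2) F = Units Pi2"
      by (auto simp: units_of_def)
    from finite_bound[OF F(1,2)] obtain N where N: "\<forall>U\<in>F. \<exists>ks\<in>lists Xgens. set ks \<subseteq> {..N} \<and> U = CG (E ks)" by blast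
    have s: "[Suc N] \<in> lists Xgens" by (simp add: Xgens_def)
    then have "CG (E [Suc N]) \<in> generate (units_of Pi2) F" using E_Units[OF s] F(3) by simp
    from gen_bound[OF N this] obtain ks where ks: "ks \<in> lists Xgens" "set ks \<subseteq> {..N}" "CG (E [Suc N]) = CG (E ks)" by blast
    from CG_E_eq[OF s ks(1) ks(3)] have "([Suc N], ks) \<in> XR" using X.class_eq_iff s ks(1) by simp
    moreover obtain ks' where r: "xred ks'" "set ks' \<subseteq> set ks" "(ks, ks') \<in> XR" using red_ex[OF ks(1)] by blast
    ultimately have "([Suc N], ks') \<in> XR" by (meson pres_rel.trans)
    then have "[Suc N] = ks'" using XR_red_eq xred_single r(1) by blast
    then have "Suc N \<in> set ks" using r(2) by auto
    with ks(2) show False by auto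
  qed
qed


end
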